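(* Let $A\in\mathbb{R}^{s\times n}$ have rank $s\le n$ and let $y\in(\ker A)^\perp$ be a unit vector. Then the vector $v=(A^\dagger)^Ty\in\mathbb{R}^s$ satisfies $$\|v\|=\left|\frac{\det A^{(y)}}{\det\tilde A}\right|=\frac{1}{\|(Ay)^\perp\|}.$$
   Context: $A^\dagger=A^T(AA^T)^{-1}$ is the Moore–Penrose inverse. $\tilde A\colon(\ker A)^\perp\to\mathbb{R}^s$ is the restriction of $A$; $A^{(y)}\colon(\mathbb{R}y\oplus\ker A)^\perp\to\operatorname{im}A^{(y)}$ is the restriction of $A$ to the orthogonal complement of $\mathbb{R}y\oplus\ker A$, viewed as a map onto its $(s-1)$-dimensional image. Determinants of linear maps between inner-product spaces of equal dimension are taken with respect to orthonormal bases (well defined up to sign). $(Ay)^\perp$ denotes the orthogonal projection of $Ay$ onto the orthogonal complement in $\mathbb{R}^s$ of $\operatorname{im}A^{(y)}$, so that $|\det\tilde A|=|\det A^{(y)}|\cdot\|(Ay)^\perp\|$. *)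

theory Defs
  imports "HOL-Analysis.Analysis"
begin

definition detn :: "nat \<Rightarrow> (nat \<Rightarrow> nat \<Rightarrow> real) \<Rightarrow> real" where
  "detn k M = (\<Sum>p | p permutes {..<k}. of_int (sign p) * (\<Prod>i<k. M i (p i)))"

definition onb :: "'a::euclidean_space set \<Rightarrow> nat \<Rightarrow> 'a" where
  "onb V = (SOME b. (\<forall>i<dim V. b i \<in> V) \<and>
                    (\<forall>i<dim V. \<forall>j<dim V. b i \<bullet> b j = (if i = j then 1 else 0)) \<and>
                    span (b ` {..<dim V}) = span V)"

text \<open>Absolute value of the determinant of a linear map f restricted to V, viewed as a map
  into W (dim V = dim W), computed with respect to orthonormal bases of V and W.\<close>
definition abs_det_restr ::
  "('a::euclidean_space \<Rightarrow> 'b::euclidean_space) \<Rightarrow> 'a set \<Rightarrow> 'b set \<Rightarrow> real" where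
  "abs_det_restr f V W = \<bar>detn (dim V) (\<lambda>i j. onb W i \<bullet> f (onb V j))\<bar>"

definition mat_ker :: "real^'n^'s \<Rightarrow> (real^'n) set" where
  "mat_ker A = {x. A *v x = 0}"

text \<open>Moore--Penrose inverse of a full row rank matrix: A^T (A A^T)^{-1}.\<close>
definition pinv :: "real^'n^'s \<Rightarrow> real^'s^'n" where
  "pinv A = transpose A ** matrix_inv (A ** transpose A)"

definition perp_part :: "'a::euclidean_space set \<Rightarrow> 'a \<Rightarrow> 'a" where
  "perp_part W x = (THE z. z \<in> orthogonal_comp W \<and> x - z \<in> W)"

end

theory Submission
  imports Defs Jordan_Normal_Form.Determinant
begin

no_notation Matrix.scalar_prod (infix "\<bullet>" 70)
hide_const (open) Matrix.orthogonal
lemmas orth_def = real_inner_class.orthogonal_def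

definition onbp :: "'a::euclidean_space set \<Rightarrow> nat \<Rightarrow> (nat \<Rightarrow> 'a) \<Rightarrow> bool" where
  "onbp V k b \<longleftrightarrow> (\<forall>i<k. b i \<in> V) \<and> (\<forall>i<k. \<forall>j<k. b i \<bullet> b j = (if i = j then 1 else 0))
      \<and> span (b ` {..<k}) = span V"

lemma onb_onbp:
  fixes V :: "'a::euclidean_space set"
  assumes "subspace V"
  shows "onbp V (dim V) (onb V)"
proof -
  obtain B where B: "B \<subseteq> V" "pairwise orthogonal B" "\<And>x. x \<in> B \<Longrightarrow> norm x = 1"
      "independent B" "card B = dim V" "span B = V"
    using orthonormal_basis_subspace[OF assms] by metis
  have fin: "finite B" using B(4) finiteI_independent by blast
  obtain h where h: "bij_betw h {0..<card B} B" using ex_bij_betw_nat_finite[OF fin] by blast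
  have hB: "h ` {..<dim V} = B" using h B(5) by (simp add: bij_betw_def lessThan_atLeast0)
  have inj: "inj_on h {..<dim V}" using h B(5) by (simp add: bij_betw_def lessThan_atLeast0)
  have ex: "\<exists>b. (\<forall>i<dim V. b i \<in> V) \<and>
                    (\<forall>i<dim V. \<forall>j<dim V. b i \<bullet> b j = (if i = j then 1 else 0)) \<and>
                    span (b ` {..<dim V}) = span V"
  proof (intro exI[of _ h] conjI allI impI)
    fix i assume "i < dim V" then show "h i \<in> V" using hB B(1) by blast
  next
    fix i j assume ij: "i < dim V" "j < dim V"
    then have hi: "h i \<in> B" "h j \<in> B" using hB by auto
    show "h i \<bullet> h j = (if i = j then 1 else 0)"
    proof (cases "i = j")
      case True then show ?thesis using B(3)[OF hi(1)] by (simp add: norm_eq_1)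
    next
      case False
      then have "h i \<noteq> h j" using inj ij by (meson inj_on_eq_iff lessThan_iff)
      then show ?thesis using B(2) hi False by (simp add: pairwise_def orth_def)
    qed
  next
    show "span (h ` {..<dim V}) = span V" using hB B(6) assms real_vector.span_eq_iff by metis
  qed
  show ?thesis unfolding onbp_def onb_def by (rule someI_ex[OF ex])
qed

lemma onbp_expand:
  assumes "onbp V k b" "x \<in> span V"
  shows "x = (\<Sum>i<k. (b i \<bullet> x) *\<^sub>R b i)"
proof -
  have x: "x \<in> span (b ` {..<k})" using assms unfolding onbp_def by auto
  have base: "y = (\<Sum>i<k. (b i \<bullet> y) *\<^sub>R b i)" if "y \<in> b ` {..<k}" for y
  proof -
    from that obtain j where j: "j < k" "y = b j" by auto
    have "(\<Sum>i<k. (b i \<bullet> b j) *\<^sub>R b i) = (\<Sum>i<k. (if i = j then b i else 0))"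
      using assms(1) j(1) unfolding onbp_def by (intro sum.cong) auto
    also have "\<dots> = b j" using j(1) by (simp add: sum.delta)
    finally show ?thesis using j by simp
  qed
  show ?thesis
  proof (induction rule: span_induct_alt[OF x])
    case 1 then show ?case by simp
  next
    case (2 c z w)
    have "(\<Sum>i<k. (b i \<bullet> (c *\<^sub>R z + w)) *\<^sub>R b i)
        = c *\<^sub>R (\<Sum>i<k. (b i \<bullet> z) *\<^sub>R b i) + (\<Sum>i<k. (b i \<bullet> w) *\<^sub>R b i)"
      by (simp add: inner_add_right scaleR_add_left sum.distrib scaleR_sum_right)
    then show ?case using 2 base[OF 2(1)] by simp
  qed
qed

lemma onbpI:
  fixes V :: "'a::euclidean_space set"
  assumes "subspace V" "k = dim V" "\<forall>i<k. b i \<in> V"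
    "\<forall>i<k. \<forall>j<k. b i \<bullet> b j = (if i = j then 1 else 0)"
  shows "onbp V k b"
proof -
  have inj: "inj_on b {..<k}"
  proof (rule inj_onI)
    fix i j assume "i \<in> {..<k}" "j \<in> {..<k}" "b i = b j"
    then have "b i \<bullet> b j = 1" using assms(4) by (metis lessThan_iff)
    then show "i = j" using assms(4) \<open>i \<in> {..<k}\<close> \<open>j \<in> {..<k}\<close> by (metis lessThan_iff zero_neq_one)
  qed
  let ?B = "b ` {..<k}"
  have card: "card ?B = dim V" using card_image[OF inj] assms(2) by simp
  have sub: "?B \<subseteq> V" using assms(3) by auto
  have ind: "independent ?B"
  proof (rule pairwise_orthogonal_independent)
    show "pairwise orthogonal ?B" using assms(4) by (auto simp: pairwise_def orth_def)
    show "0 \<notin> ?B" using assms(4) by (auto, metis inner_zero_left zero_neq_one)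
  qed
  have "V \<subseteq> span ?B" using card_eq_dim[OF sub card] ind by simp
  moreover have "span ?B \<subseteq> V" using sub assms(1) by (simp add: span_minimal)
  ultimately have "span ?B = V" by (simp add: span_minimal subset_antisym span_superset)
  then show ?thesis unfolding onbp_def using assms real_vector.span_eq_iff by metis
qed


lemma detn_mat: "detn k M = Determinant.det (Matrix.mat k k (\<lambda>(i,j). M i j))"
proof -
  have "Determinant.det (Matrix.mat k k (\<lambda>(i,j). M i j)) = (\<Sum>p\<in>{p. p permutes {0..<k}}.
     signof p * (\<Prod>i = 0..<k. Matrix.mat k k (\<lambda>(i,j). M i j) $$ (i, p i)))"
    by (rule det_def') simp
  also have "\<dots> = detn k M"
    unfolding detn_def lessThan_atLeast0
  proof (intro sum.cong refl)
    fix p assume "p \<in> {p. p permutes {0..<k}}"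
    then have p: "p permutes {0..<k}" by simp
    show "of_int (sign p) * (\<Prod>i = 0..<k. Matrix.mat k k (\<lambda>(i, j). M i j) $$ (i, p i)) =
        of_int (sign p) * (\<Prod>i = 0..<k. M i (p i))"
      using permutes_in_image[OF p] by (intro arg_cong2[where f="(*)"] refl prod.cong) auto
  qed
  finally show ?thesis by simp
qed

lemma mat_mult_sum:
  "Matrix.mat k k (\<lambda>(i,j). \<Sum>l<k. F i l * G l j) =
   Matrix.mat k k (\<lambda>(i,j). F i j) * Matrix.mat k k (\<lambda>(i,j). G i j)"
  by (rule eq_matI) (auto simp: scalar_prod_def lessThan_atLeast0 intro!: sum.cong)

lemma orth_det:
  assumes "\<forall>i<k. \<forall>j<k. (\<Sum>m<k. P m i * P m j) = (if i = j then 1 else (0::real))"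
  shows "\<bar>Determinant.det (Matrix.mat k k (\<lambda>(i,j). P i j))\<bar> = 1"
proof -
  let ?X = "Matrix.mat k k (\<lambda>(i,j). P i j)"
  have X: "?X \<in> carrier_mat k k" by simp
  have "transpose_mat ?X * ?X = 1\<^sub>m k"
    using assms by (intro eq_matI) (auto simp: scalar_prod_def lessThan_atLeast0)
  then have "Determinant.det (transpose_mat ?X * ?X) = 1" by simp
  then have "Determinant.det ?X * Determinant.det ?X = 1"
    by (subst (asm) det_mult[of _ k]) (auto simp: det_transpose[OF X])
  then have "(Determinant.det ?X)\<^sup>2 = 1" by (simp add: power2_eq_square)
  then have "Determinant.det ?X = 1 \<or> Determinant.det ?X = -1" by (simp add: power2_eq_1_iff)
  then show ?thesis by auto
qed

lemma change_orth:
  assumes "onbp V k b" "onbp V k e"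
  shows "\<forall>i<k. \<forall>j<k. (\<Sum>m<k. (e m \<bullet> b i) * (e m \<bullet> b j)) = (if i = j then 1 else 0)"
proof (intro allI impI)
  fix i j assume ij: "i < k" "j < k"
  have bj: "b j \<in> span V" using assms(1) ij unfolding onbp_def by (auto intro: span_base)
  have "b i \<bullet> b j = b i \<bullet> (\<Sum>m<k. (e m \<bullet> b j) *\<^sub>R e m)"
    using onbp_expand[OF assms(2) bj] by simp
  also have "\<dots> = (\<Sum>m<k. (e m \<bullet> b i) * (e m \<bullet> b j))"
    by (simp add: inner_sum_right inner_commute mult.commute)
  finally show "(\<Sum>m<k. (e m \<bullet> b i) * (e m \<bullet> b j)) = (if i = j then 1 else 0)"
    using assms(1) ij unfolding onbp_def by simp
qed


lemma detn_inv:
  assumes lin: "linear f" and ob: "onbp V k b" and oe: "onbp V k e"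
    and oc: "onbp W k c" and od: "onbp W k d" and fW: "f ` V \<subseteq> span W"
  shows "\<bar>detn k (\<lambda>i j. c i \<bullet> f (b j))\<bar> = \<bar>detn k (\<lambda>i j. d i \<bullet> f (e j))\<bar>"
proof -
  have s1: "c i \<bullet> f (b j) = (\<Sum>l<k. (c i \<bullet> d l) * (d l \<bullet> f (b j)))" if "j < k" for i j
  proof -
    have "f (b j) \<in> span W" using fW ob that unfolding onbp_def by auto
    then have "c i \<bullet> f (b j) = c i \<bullet> (\<Sum>l<k. (d l \<bullet> f (b j)) *\<^sub>R d l)"
      using onbp_expand[OF od] by metis
    then show ?thesis by (simp add: inner_sum_right mult.commute)
  qed
  have s2: "d l \<bullet> f (b j) = (\<Sum>m<k. (d l \<bullet> f (e m)) * (e m \<bullet> b j))" if "j < k" for l j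
  proof -
    have "b j \<in> span V" using ob that unfolding onbp_def by (auto intro: span_base)
    then have "f (b j) = f (\<Sum>m<k. (e m \<bullet> b j) *\<^sub>R e m)"
      using onbp_expand[OF oe] by metis
    also have "\<dots> = (\<Sum>m<k. (e m \<bullet> b j) *\<^sub>R f (e m))"
      by (simp add: linear_sum[OF lin] linear_scale[OF lin] o_def)
    finally show ?thesis by (simp add: inner_sum_right mult.commute)
  qed
  let ?Q = "Matrix.mat k k (\<lambda>(i,j). c i \<bullet> d j)"
  let ?N = "Matrix.mat k k (\<lambda>(i,j). d i \<bullet> f (e j))"
  let ?P = "Matrix.mat k k (\<lambda>(i,j). e i \<bullet> b j)"
  let ?NP = "Matrix.mat k k (\<lambda>(i,j). d i \<bullet> f (b j))"
  have NP: "?NP = ?N * ?P"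
  proof -
    have "?NP = Matrix.mat k k (\<lambda>(i,j). \<Sum>m<k. (d i \<bullet> f (e m)) * (e m \<bullet> b j))"
      using s2 by (intro eq_matI) auto
    then show ?thesis using mat_mult_sum[of k "\<lambda>i j. d i \<bullet> f (e j)" "\<lambda>i j. e i \<bullet> b j"] by simp
  qed
  have M: "Matrix.mat k k (\<lambda>(i,j). c i \<bullet> f (b j)) = ?Q * ?NP"
  proof -
    have "Matrix.mat k k (\<lambda>(i,j). c i \<bullet> f (b j)) =
        Matrix.mat k k (\<lambda>(i,j). \<Sum>l<k. (c i \<bullet> d l) * (d l \<bullet> f (b j)))"
      using s1 by (intro eq_matI) auto
    then show ?thesis using mat_mult_sum[of k "\<lambda>i j. c i \<bullet> d j" "\<lambda>i j. d i \<bullet> f (b j)"] by simp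
  qed
  have dQ: "\<bar>Determinant.det ?Q\<bar> = 1"
    using orth_det[of k "\<lambda>i j. c i \<bullet> d j"] change_orth[OF od oc] by simp
  have dP: "\<bar>Determinant.det ?P\<bar> = 1"
    using orth_det[of k "\<lambda>i j. e i \<bullet> b j"] change_orth[OF ob oe] by simp
  have "Determinant.det (Matrix.mat k k (\<lambda>(i,j). c i \<bullet> f (b j)))
      = Determinant.det ?Q * (Determinant.det ?N * Determinant.det ?P)"
  proof -
    have c: "?Q \<in> carrier_mat k k" "?N \<in> carrier_mat k k" "?P \<in> carrier_mat k k" by auto
    then have "?N * ?P \<in> carrier_mat k k" by auto
    then show ?thesis unfolding M NP using det_mult[OF c(1)] det_mult[OF c(2) c(3)] by metis
  qed
  then have "\<bar>Determinant.det (Matrix.mat k k (\<lambda>(i,j). c i \<bullet> f (b j)))\<bar> = \<bar>Determinant.det ?N\<bar>"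
    using dQ dP by (simp add: abs_mult)
  then show ?thesis by (simp add: detn_mat)
qed


lemma detn_block:
  assumes "0 < k" "\<forall>m < k - 1. N (k - 1) m = 0"
  shows "detn k N = detn (k - 1) N * N (k - 1) (k - 1)"
proof -
  define n where "n = k - 1"
  have k: "k = n + 1" using assms(1) n_def by simp
  let ?A1 = "Matrix.mat n n (\<lambda>(i,j). N i j)"
  let ?A2 = "Matrix.mat n 1 (\<lambda>(i,j). N i n)"
  let ?A4 = "Matrix.mat 1 1 (\<lambda>(i,j). N n n)"
  have eq: "Matrix.mat k k (\<lambda>(i,j). N i j) = four_block_mat ?A1 ?A2 (0\<^sub>m 1 n) ?A4"
  proof (rule eq_matI)
    fix i j assume ij: "i < dim_row (four_block_mat ?A1 ?A2 (0\<^sub>m 1 n) ?A4)"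
      "j < dim_col (four_block_mat ?A1 ?A2 (0\<^sub>m 1 n) ?A4)"
    then have ij': "i < n + 1" "j < n + 1" by auto
    show "Matrix.mat k k (\<lambda>(i,j). N i j) $$ (i, j) = four_block_mat ?A1 ?A2 (0\<^sub>m 1 n) ?A4 $$ (i, j)"
      using ij' assms(2) unfolding k n_def[symmetric] by (auto simp: less_Suc_eq)
  qed (use k in auto)
  have "Determinant.det (Matrix.mat k k (\<lambda>(i,j). N i j)) = Determinant.det ?A1 * Determinant.det ?A4"
    unfolding eq by (rule det_four_block_mat_lower_left_zero) auto
  also have "Determinant.det ?A4 = N n n" by (subst det_single) auto
  finally show ?thesis by (simp add: detn_mat n_def)
qed

lemma detn_nonzero:
  assumes lin: "linear f" and ob: "onbp V k b" and oc: "onbp W k c"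
    and fW: "f ` V \<subseteq> span W" and inj: "\<forall>x\<in>span V. f x = 0 \<longrightarrow> x = 0"
  shows "detn k (\<lambda>i j. c i \<bullet> f (b j)) \<noteq> 0"
proof
  let ?M = "Matrix.mat k k (\<lambda>(i,j). c i \<bullet> f (b j))"
  assume "detn k (\<lambda>i j. c i \<bullet> f (b j)) = 0"
  then have "Determinant.det ?M = 0" by (simp add: detn_mat)
  then obtain v where v: "v \<in> carrier_vec k" "v \<noteq> 0\<^sub>v k" "?M *\<^sub>v v = 0\<^sub>v k"
    using det_0_iff_vec_prod_zero_field[of ?M k] by auto
  define x where "x = (\<Sum>j<k. vec_index v j *\<^sub>R b j)"
  have bV: "b j \<in> V" if "j < k" for j using ob that unfolding onbp_def by auto
  have xV: "x \<in> span V" unfolding x_def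
    by (intro span_sum span_scale span_base bV) auto
  have fx: "f x = (\<Sum>j<k. vec_index v j *\<^sub>R f (b j))"
    unfolding x_def by (simp add: linear_sum[OF lin] linear_scale[OF lin] o_def)
  have fxW: "f x \<in> span W" unfolding fx
    using fW bV by (intro span_sum span_scale) auto
  have ci: "c i \<bullet> f x = 0" if "i < k" for i
  proof -
    have "vec_index (?M *\<^sub>v v) i = 0" using v(3) that by simp
    then have "(\<Sum>j<k. (c i \<bullet> f (b j)) * vec_index v j) = 0"
      using that v(1) by (simp add: scalar_prod_def lessThan_atLeast0)
    then show ?thesis unfolding fx by (simp add: inner_sum_right mult.commute)
  qed
  have "f x = (\<Sum>i<k. (c i \<bullet> f x) *\<^sub>R c i)" using onbp_expand[OF oc fxW] .
  also have "\<dots> = 0" using ci by simp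
  finally have "x = 0" using inj xV by blast
  have "vec_index v j = 0" if "j < k" for j
  proof -
    have "b j \<bullet> x = (\<Sum>m<k. vec_index v m * (b j \<bullet> b m))"
      unfolding x_def by (simp add: inner_sum_right)
    also have "\<dots> = (\<Sum>m<k. if m = j then vec_index v m else 0)"
      using ob that unfolding onbp_def by (intro sum.cong) auto
    also have "\<dots> = vec_index v j" using that by (simp add: sum.delta)
    finally show ?thesis using \<open>x = 0\<close> by simp
  qed
  then have "v = 0\<^sub>v k" using v(1) by (intro eq_vecI) auto
  then show False using v(2) by simp
qed


lemma detn_cong:
  assumes "\<forall>i<k. \<forall>j<k. M i j = M' i j"
  shows "detn k M = detn k M'"
proof -
  have "Matrix.mat k k (\<lambda>(i,j). M i j) = Matrix.mat k k (\<lambda>(i,j). M' i j)"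
    using assms by (intro eq_matI) auto
  then show ?thesis by (simp add: detn_mat)
qed

lemma perp_part_props:
  fixes W :: "'a::euclidean_space set"
  assumes "subspace W"
  shows "perp_part W x \<in> orthogonal_comp W \<and> x - perp_part W x \<in> W"
proof -
  obtain a z where az: "a \<in> span W" "\<And>w. w \<in> span W \<Longrightarrow> orthogonal z w" "x = a + z"
    using orthogonal_subspace_decomp_exists[of W x] by metis
  have sW: "span W = W" using assms by simp
  have ex: "z \<in> orthogonal_comp W \<and> x - z \<in> W"
    using az unfolding sW by (auto simp: orthogonal_comp_def orth_def inner_commute)
  have uniq: "z' = z" if "z' \<in> orthogonal_comp W \<and> x - z' \<in> W" for z'
  proof -
    have "z' - z = (x - z) - (x - z')" by simp
    then have d1: "z' - z \<in> W" using ex that assms by (metis real_vector.subspace_diff)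
    have d2: "z' - z \<in> orthogonal_comp W" using ex that subspace_orthogonal_comp
      by (metis real_vector.subspace_diff)
    have "(z' - z) \<bullet> (z' - z) = 0" using d1 d2 by (auto simp: orthogonal_comp_def orth_def)
    then show ?thesis by simp
  qed
  have "perp_part W x = z" unfolding perp_part_def using ex uniq by (rule the_equality)
  then show ?thesis using ex by simp
qed


theorem lemma3p13:
  fixes A :: "real^'n^'s" and y :: "real^'n"
  assumes "CARD('s) \<le> CARD('n)"
    and "rank A = CARD('s)"
    and "y \<in> orthogonal_comp (mat_ker A)"
    and "norm y = 1"
  shows "norm (transpose (pinv A) *v y) =
           \<bar>abs_det_restr (\<lambda>x. A *v x) (orthogonal_comp (span ({y} \<union> mat_ker A)))
                ((\<lambda>x. A *v x) ` orthogonal_comp (span ({y} \<union> mat_ker A)))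
            / abs_det_restr (\<lambda>x. A *v x) (orthogonal_comp (mat_ker A)) (UNIV :: (real^'s) set)\<bar>
       \<and> norm (transpose (pinv A) *v y) =
           1 / norm (perp_part ((\<lambda>x. A *v x) ` orthogonal_comp (span ({y} \<union> mat_ker A))) (A *v y))"
proof -
  define f where "f = (\<lambda>x. A *v x)"
  define K where "K = mat_ker A"
  define R where "R = orthogonal_comp K"
  define S where "S = span ({y} \<union> K)"
  define U where "U = orthogonal_comp S"
  define W where "W = f ` U"
  define p where "p = perp_part W (A *v y)"
  define s where "s = CARD('s)"
  have lin: "linear f" unfolding f_def by simp
  have subK: "subspace K"
    using linear_add[OF lin] linear_scale[OF lin] linear_0[OF lin]
    by (auto simp: subspace_def K_def mat_ker_def f_def)
  have Kf: "x \<in> K \<longleftrightarrow> f x = 0" for x by (simp add: K_def mat_ker_def f_def)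
  have subR: "subspace R" unfolding R_def by (rule subspace_orthogonal_comp)
  have subS: "subspace S" unfolding S_def by simp
  have subU: "subspace U" unfolding U_def by (rule subspace_orthogonal_comp)
  have subW: "subspace W" unfolding W_def by (rule linear_subspace_image[OF lin subU])
  have yR: "y \<in> R" using assms(3) by (simp add: R_def K_def)
  have KR0: "x = 0" if "x \<in> K" "x \<in> R" for x
  proof -
    have "x \<bullet> x = 0" using that by (auto simp: R_def orthogonal_comp_def orth_def)
    then show ?thesis by simp
  qed
  have injR: "x = 0" if "x \<in> R" "f x = 0" for x using KR0 that Kf by blast
  have KS: "K \<subseteq> S" unfolding S_def by (meson Un_upper2 order.trans span_superset)
  have UR: "U \<subseteq> R" unfolding U_def R_def by (rule orthogonal_comp_anti_mono[OF KS])
  have yS: "y \<in> S" unfolding S_def by (simp add: span_base)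
  have yU: "y \<bullet> u = 0" if "u \<in> U" for u
    using that yS by (auto simp: U_def orthogonal_comp_def orth_def)
  have y0: "y \<noteq> 0" using assms(4) by auto
  have yK: "y \<notin> K" using KR0 yR y0 by blast
  have surj: "range f = UNIV" using assms(2) full_rank_surjective[of A] by (simp add: f_def)
  have fR: "f ` R = UNIV"
  proof -
    have "f x \<in> f ` R" for x
    proof -
      obtain a b where ab: "a \<in> K" "b \<in> orthogonal_comp K" "x = a + b"
        using subspace_sum_orthogonal_comp[OF subK] by (metis UNIV_I set_plus_elim)
      have "f x = f b" using ab Kf linear_add[OF lin] by simp
      then show ?thesis using ab(2) by (simp add: R_def)
    qed
    then show ?thesis using surj by (metis UNIV_eq_I UNIV_I image_iff)
  qed
  have injonR: "inj_on f (span R)"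
  proof (rule inj_onI)
    fix a b assume "a \<in> span R" "b \<in> span R" "f a = f b"
    moreover have "span R = R" using subR by simp
    ultimately have "a - b \<in> R" "f (a - b) = 0" using subR linear_diff[OF lin]
      by (auto simp: real_vector.subspace_diff)
    then have "a - b = 0" using injR by blast
    then show "a = b" by simp
  qed
  have dimR: "dim R = s"
  proof -
    have "dim (f ` R) = dim R" by (rule eucl.dim_image_eq[OF lin injonR])
    then show ?thesis unfolding fR by (simp add: s_def)
  qed
  have dimRK: "dim R + dim K = CARD('n)"
  proof -
    have "{x \<in> UNIV. \<forall>z\<in>K. orthogonal z x} = R" by (auto simp: R_def orthogonal_comp_def)
    then show ?thesis using dim_subspace_orthogonal_to_vectors[OF subK subspace_UNIV subset_UNIV] by simp
  qed
  have dimS: "dim S = dim K + 1"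
  proof -
    have "dim S = dim (insert y K)" unfolding S_def by simp
    also have "\<dots> = dim K + 1"
    proof -
      have sK: "span K = K" using subK by simp
      have "y \<notin> span K" using yK sK by metis
      then show ?thesis by (simp add: dim_insert)
    qed
    finally show ?thesis .
  qed
  have dimUS: "dim U + dim S = CARD('n)"
  proof -
    have "{x \<in> UNIV. \<forall>z\<in>S. orthogonal z x} = U" by (auto simp: U_def orthogonal_comp_def)
    then show ?thesis using dim_subspace_orthogonal_to_vectors[OF subS subspace_UNIV subset_UNIV] by simp
  qed
  define k where "k = dim U"
  have s1: "s = Suc k" using dimR dimRK dimS dimUS by (simp add: k_def)
  have injonU: "inj_on f (span U)" using injonR UR subU
    by (metis inj_on_subset real_vector.span_mono)
  have dimW: "dim W = k" unfolding W_def k_def by (rule eucl.dim_image_eq[OF lin injonU])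
  define bU where "bU = onb U"
  define cW where "cW = onb W"
  have obU: "onbp U k bU" unfolding bU_def k_def by (rule onb_onbp[OF subU])
  have ocW: "onbp W k cW" unfolding cW_def dimW[symmetric] by (rule onb_onbp[OF subW])
  have pp: "p \<in> orthogonal_comp W" "A *v y - p \<in> W"
    using perp_part_props[OF subW, of "A *v y"] by (auto simp: p_def)
  have pW: "p \<bullet> w = 0" if "w \<in> W" for w
    using pp(1) that by (auto simp: orthogonal_comp_def orth_def inner_commute)
  have p0: "p \<noteq> 0"
  proof
    assume "p = 0"
    then have "f y \<in> W" using pp(2) by (simp add: f_def)
    then obtain u where u: "u \<in> U" "f y = f u" unfolding W_def by auto
    have "y - u \<in> R" using u UR yR subR by (auto simp: real_vector.subspace_diff)
    moreover have "f (y - u) = 0" using u linear_diff[OF lin] by simp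
    ultimately have "y - u = 0" using injR by blast
    then have "y = u" by simp
    then show False using yU[OF u(1)] y0 by simp
  qed
  define nv where "nv = p /\<^sub>R norm p"
  have nvn: "nv \<bullet> nv = 1" using p0 by (simp add: nv_def inner_commute dot_square_norm power2_eq_square)
  have nvW: "nv \<bullet> w = 0" if "w \<in> W" for w using pW[OF that] by (simp add: nv_def)
  define e where "e = (\<lambda>i. if i < k then bU i else y)"
  define d where "d = (\<lambda>i. if i < k then cW i else nv)"
  have oe: "onbp R s e"
  proof (rule onbpI[OF subR dimR[symmetric]])
    show "\<forall>i<s. e i \<in> R" using obU UR yR unfolding onbp_def e_def by auto
    show "\<forall>i<s. \<forall>j<s. e i \<bullet> e j = (if i = j then 1 else 0)"
    proof -
      have yU': "u \<bullet> y = 0" if "u \<in> U" for u using yU[OF that] by (simp add: inner_commute)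
      have yy: "y \<bullet> y = 1" using assms(4) by (simp add: dot_square_norm)
      show ?thesis using obU yU yU' yy unfolding onbp_def e_def s1
        by (auto simp: less_Suc_eq)
    qed
  qed
  have od: "onbp UNIV s d"
  proof (rule onbpI[OF subspace_UNIV])
    show "s = dim (UNIV :: (real^'s) set)" by (simp add: s_def)
    show "\<forall>i<s. d i \<in> UNIV" by simp
    show "\<forall>i<s. \<forall>j<s. d i \<bullet> d j = (if i = j then 1 else 0)"
    proof -
      have nvW': "w \<bullet> nv = 0" if "w \<in> W" for w using nvW[OF that] by (simp add: inner_commute)
      show ?thesis using ocW nvW nvW' nvn unfolding onbp_def d_def s1
        by (auto simp: less_Suc_eq)
    qed
  qed
  have oR: "onbp R s (onb R)" using onb_onbp[OF subR] dimR by simp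
  have oUNIV: "onbp UNIV s (onb (UNIV :: (real^'s) set))"
    using onb_onbp[OF subspace_UNIV, where 'a="real^'s"] by (simp add: s_def)
  define M where "M = (\<lambda>i j. cW i \<bullet> f (bU j))"
  have fUW: "f (bU j) \<in> W" if "j < k" for j using obU that unfolding onbp_def W_def by auto
  have dM: "detn k M \<noteq> 0"
    unfolding M_def
  proof (rule detn_nonzero[OF lin obU ocW])
    show "f ` U \<subseteq> span W" by (auto simp: W_def intro: span_base)
    have "span U = U" using subU by simp
    then show "\<forall>x\<in>span U. f x = 0 \<longrightarrow> x = 0" using UR injR by (metis subsetD)
  qed
  have fy: "nv \<bullet> f y = norm p"
  proof -
    have "p \<bullet> (A *v y) = p \<bullet> p + p \<bullet> (A *v y - p)" by (simp add: inner_diff_right)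
    also have "\<dots> = p \<bullet> p" using pW[OF pp(2)] by simp
    finally show ?thesis using p0 by (simp add: nv_def f_def dot_square_norm power2_eq_square)
  qed
  have blk: "detn s (\<lambda>i j. d i \<bullet> f (e j)) = detn k M * norm p"
  proof -
    have "detn s (\<lambda>i j. d i \<bullet> f (e j)) = detn k (\<lambda>i j. d i \<bullet> f (e j)) * (d k \<bullet> f (e k))"
      using detn_block[of s "\<lambda>i j. d i \<bullet> f (e j)"] s1 nvW fUW by (simp add: d_def e_def)
    also have "detn k (\<lambda>i j. d i \<bullet> f (e j)) = detn k M"
      by (rule detn_cong) (simp add: d_def e_def M_def)
    also have "d k \<bullet> f (e k) = norm p" using fy by (simp add: d_def e_def)
    finally show ?thesis .
  qed
  have den: "abs_det_restr f R UNIV = \<bar>detn k M\<bar> * norm p"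
  proof -
    have "abs_det_restr f R UNIV = \<bar>detn s (\<lambda>i j. onb UNIV i \<bullet> f (onb R j))\<bar>"
      unfolding abs_det_restr_def dimR ..
    also have "\<dots> = \<bar>detn s (\<lambda>i j. d i \<bullet> f (e j))\<bar>"
      by (rule detn_inv[OF lin oR oe oUNIV od]) simp
    finally show ?thesis using blk by (simp add: abs_mult)
  qed
  have num: "abs_det_restr f U W = \<bar>detn k M\<bar>"
    unfolding abs_det_restr_def k_def[symmetric] M_def bU_def cW_def ..
  have ratio: "\<bar>abs_det_restr f U W / abs_det_restr f R UNIV\<bar> = 1 / norm p"
    unfolding num den using dM p0 by simp
  define G where "G = A ** transpose A"
  have Ginj: "\<forall>w. G *v w = 0 \<longrightarrow> w = 0"
  proof (intro allI impI)
    fix w assume "G *v w = 0"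
    then have "A *v (w v* A) = 0" by (simp add: G_def matrix_vector_mul_assoc[symmetric])
    then have "(w v* A) \<bullet> (w v* A) = 0" using dot_lmul_matrix[of w A "w v* A"] by simp
    then have tw: "w v* A = 0" by simp
    obtain x where "f x = w" using surj by (metis UNIV_I image_iff)
    then have "w \<bullet> w = (w v* A) \<bullet> x" using dot_lmul_matrix[of w A x] by (simp add: f_def)
    then show "w = 0" using tw by simp
  qed
  obtain B where "B ** G = Finite_Cartesian_Product.mat 1"
    using Ginj matrix_left_invertible_ker[of G] by blast
  then have exinv: "\<exists>B. G ** B = Finite_Cartesian_Product.mat 1 \<and> B ** G = Finite_Cartesian_Product.mat 1"
    using matrix_left_right_inverse by blast
  define Gi where "Gi = matrix_inv G"
  have Gi: "G ** Gi = Finite_Cartesian_Product.mat 1" "Gi ** G = Finite_Cartesian_Product.mat 1"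
    using someI_ex[OF exinv] by (auto simp: Gi_def matrix_inv_def)
  have GT: "transpose G = G" by (simp add: G_def matrix_transpose_mul)
  have "transpose Gi ** G = Finite_Cartesian_Product.mat 1"
    using arg_cong[OF Gi(1), of transpose] by (simp add: matrix_transpose_mul GT transpose_mat)
  then have GTi: "G ** transpose Gi = Finite_Cartesian_Product.mat 1" using matrix_left_right_inverse by blast
  define v where "v = transpose (pinv A) *v y"
  have v: "v = transpose Gi *v (A *v y)"
    by (simp add: v_def pinv_def matrix_transpose_mul Gi_def G_def matrix_vector_mul_assoc)
  have Gv: "G *v v = A *v y" unfolding v by (simp add: matrix_vector_mul_assoc matrix_mul_assoc GTi matrix_mul_lid)
  have ATv: "transpose A *v v = y"
  proof -
    have "f (y - transpose A *v v) = 0"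
    proof -
      have "A *v (transpose A *v v) = A *v y" using Gv by (simp only: G_def matrix_vector_mul_assoc)
      then show ?thesis using linear_diff[OF lin] by (simp add: f_def)
    qed
    moreover have "transpose A *v v \<in> R"
    proof -
      have "(transpose A *v v) \<bullet> z = 0" if "z \<in> K" for z
        using dot_lmul_matrix[of v A z] that Kf by (simp add: f_def)
      then have "z \<bullet> (transpose A *v v) = 0" if "z \<in> K" for z
        using that by (simp add: inner_commute)
      then show ?thesis by (auto simp: R_def orthogonal_comp_def orth_def)
    qed
    then have "y - transpose A *v v \<in> R" using yR subR by (simp add: real_vector.subspace_diff)
    ultimately have "y - transpose A *v v = 0" using injR by blast
    then show ?thesis by simp
  qed
  have vfx: "v \<bullet> f x = y \<bullet> x" for x
    using dot_lmul_matrix[of v A x] ATv by (simp add: f_def)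
  have vW: "v \<bullet> w = 0" if "w \<in> W" for w
    using that yU vfx by (auto simp: W_def)
  have vp: "nv \<bullet> v = 1 / norm p"
  proof -
    have "v \<bullet> p = v \<bullet> (A *v y) - v \<bullet> (A *v y - p)" by (simp add: inner_diff_right)
    also have "\<dots> = 1" using vW[OF pp(2)] vfx[of y] assms(4) by (simp add: f_def dot_square_norm)
    finally show ?thesis by (simp add: nv_def inner_commute divide_inverse)
  qed
  have vexp: "v = (\<Sum>i<s. (d i \<bullet> v) *\<^sub>R d i)" by (rule onbp_expand[OF od]) simp
  also have "\<dots> = (nv \<bullet> v) *\<^sub>R nv"
  proof -
    have "cW i \<bullet> v = 0" if "i < k" for i
      using vW[of "cW i"] ocW that unfolding onbp_def by (simp add: inner_commute)
    then show ?thesis unfolding s1 d_def by simp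
  qed
  finally have "norm v = norm ((nv \<bullet> v) *\<^sub>R nv)" by (rule arg_cong)
  then have "norm v = \<bar>nv \<bullet> v\<bar> * norm nv" by (simp only: norm_scaleR)
  then have nv: "norm v = 1 / norm p" using vp p0 by (simp add: nv_def)
  show ?thesis
    using nv ratio
    unfolding v_def p_def W_def U_def S_def K_def R_def f_def by simp
qed

end
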